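(* Let $\mathcal{H}$ be a real Hilbert space, and let $C$ and $Q$ be nonempty, closed and convex subsets of $\mathcal{H}$. Let $f:\mathcal{H}\to\mathcal{H}$ be $\alpha_1$-inverse strongly monotone and $g:\mathcal{H}\to\mathcal{H}$ be $\alpha_2$-inverse strongly monotone, for some $\alpha_1,\alpha_2>0$. Set $\alpha:=\min\{\alpha_1,\alpha_2\}$ and let $\lambda\in(0,2\alpha)$. Assume that $\Gamma:=SOL(C,f)\cap SOL(Q,g)\neq\emptyset$. Given an arbitrary $x^0\in\mathcal{H}$, define the sequences $$y^k=P_Q\big(x^k-\lambda g(x^k)\big),\qquad x^{k+1}=P_C\big(y^k-\lambda f(y^k)\big),\qquad k=0,1,2,\ldots.$$ Then $\{x^k\}_{k=0}^\infty$ converges weakly to a point $x^\ast\in\Gamma$, and moreover $x^\ast=\lim_{k\to\infty}P_\Gamma(x^k)$ (strong limit).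
   Context: An operator $h:\mathcal{H}\to\mathcal{H}$ is $\beta$-inverse strongly monotone ($\beta>0$) if $\langle h(x)-h(y),x-y\rangle\geq\beta\|h(x)-h(y)\|^2$ for all $x,y\in\mathcal{H}$. For a nonempty closed convex set $D\subset\mathcal{H}$, $P_D$ denotes the metric (nearest point) projection onto $D$. For such $D$ and an operator $h$, $SOL(D,h)$ denotes the solution set of the variational inequality: the set of $x^\ast\in D$ with $\langle h(x^\ast),x-x^\ast\rangle\geq 0$ for all $x\in D$. The set $\Gamma$ is closed and convex (so $P_\Gamma$ is well defined when $\Gamma\ne\emptyset$). *)

theory Defs
  imports "HOL-Analysis.Analysis"
begin

text \<open>Real Hilbert space: type class {real_inner, complete_space}.\<close>

definition inverse_strongly_monotone :: "real \<Rightarrow> ('a::real_inner \<Rightarrow> 'a) \<Rightarrow> bool" where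
  "inverse_strongly_monotone \<beta> h \<longleftrightarrow> \<beta> > 0 \<and>
     (\<forall>x y. inner (h x - h y) (x - y) \<ge> \<beta> * (norm (h x - h y))\<^sup>2)"

definition metric_proj :: "'a::real_inner set \<Rightarrow> 'a \<Rightarrow> 'a" where
  "metric_proj D x = (SOME p. p \<in> D \<and> (\<forall>z\<in>D. norm (x - p) \<le> norm (x - z)))"

definition SOL :: "'a::real_inner set \<Rightarrow> ('a \<Rightarrow> 'a) \<Rightarrow> 'a set" where
  "SOL D h = {xs \<in> D. \<forall>x\<in>D. inner (h xs) (x - xs) \<ge> 0}"

definition weakly_converges :: "(nat \<Rightarrow> 'a::real_inner) \<Rightarrow> 'a \<Rightarrow> bool" where
  "weakly_converges u l \<longleftrightarrow> (\<forall>z. (\<lambda>k. inner (u k) z) \<longlonglongrightarrow> inner l z)"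

end

theory Submission
  imports Defs
begin

lemma sq_tri_aux:
  fixes A B C :: real
  assumes "0 \<le> A" "0 \<le> B" "0 \<le> C" "A \<le> B + C"
  shows "A\<^sup>2 \<le> B\<^sup>2 + 2 * A * C"
proof (cases "A \<le> C")
  case True
  have "A\<^sup>2 \<le> A * C" using True assms by (simp add: power2_eq_square mult_left_mono)
  also have "\<dots> \<le> B\<^sup>2 + 2 * A * C" using assms by (simp add: mult_nonneg_nonneg)
  finally show ?thesis .
next
  case False
  have "(A - C)\<^sup>2 \<le> B\<^sup>2" using False assms by (intro power_mono) auto
  then have "A*A + C*C - 2*A*C \<le> B*B" by (simp add: power2_eq_square algebra_simps)
  moreover have "0 \<le> C*C" by simp
  ultimately have "A*A \<le> B*B + 2*A*C" by linarith
  then show ?thesis by (simp add: power2_eq_square)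
qed

lemma norm_sq_diff_bound:
  fixes x a b :: "'a::real_inner"
  shows "(norm (x - a))\<^sup>2 \<le> (norm (x - b))\<^sup>2 + 2 * norm (x - a) * norm (a - b)"
proof -
  have "norm (x - a) \<le> norm (x - b) + norm (a - b)"
    using norm_triangle_ineq[of "x-b" "b-a"] by (simp add: norm_minus_commute)
  then show ?thesis by (intro sq_tri_aux) auto
qed

lemma mid_identity:
  fixes x a b :: "'a::real_inner"
  shows "(norm (x - (1/2) *\<^sub>R (a + b)))\<^sup>2 =
     ((norm (x - a))\<^sup>2 + (norm (x - b))\<^sup>2) / 2 - (norm (a - b))\<^sup>2 / 4"
  by (simp add: power2_norm_eq_inner inner_diff_left inner_diff_right inner_add_left
      inner_add_right inner_commute algebra_simps) (simp add: field_simps)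

lemma conv_identity:
  fixes X Y :: "'a::real_inner"
  assumes "u + v = 1"
  shows "(norm (u *\<^sub>R X + v *\<^sub>R Y))\<^sup>2 =
     u * (norm X)\<^sup>2 + v * (norm Y)\<^sup>2 - u * v * (norm (X - Y))\<^sup>2"
proof -
  have v: "v = 1 - u" using assms by simp
  show ?thesis unfolding v power2_norm_eq_inner
    by (simp add: inner_diff_left inner_diff_right inner_add_left
      inner_add_right inner_commute algebra_simps)
qed

lemma lin_aux: "(m::real) \<le> (a + b)/2 - N/4 \<Longrightarrow> a < m + p \<Longrightarrow> b < m + q \<Longrightarrow> N \<le> 2*p + 2*q"
  by argo

lemma inv_suc_lim: "(\<lambda>n. 1 / (real n + 1)) \<longlonglongrightarrow> 0"
  using LIMSEQ_inverse_real_of_nat by (simp add: inverse_eq_divide add.commute)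
lemma arch_aux: "0 < (x::real) \<Longrightarrow> \<exists>N::nat. 1 / (real N + 1) < x"
  using reals_Archimedean by (fastforce simp: inverse_eq_divide add.commute)

lemma min_exists:
  fixes r :: "'a::{real_inner,complete_space} \<Rightarrow> real"
  assumes D: "D \<noteq> {}" "closed D" "convex D"
    and lb: "\<And>y. y \<in> D \<Longrightarrow> 0 \<le> r y"
    and mid: "\<And>a b. a \<in> D \<Longrightarrow> b \<in> D \<Longrightarrow>
       r ((1/2) *\<^sub>R (a + b)) \<le> (r a + r b) / 2 - (norm (a - b))\<^sup>2 / 4"
    and cont: "\<And>a. a \<in> D \<Longrightarrow> \<exists>K. \<forall>b\<in>D. r a \<le> r b + K * norm (a - b)"
  shows "\<exists>c\<in>D. \<forall>y\<in>D. r c \<le> r y"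
proof -
  define m where "m = Inf (r ` D)"
  have bdd: "bdd_below (r ` D)" using lb by (intro bdd_belowI[of _ 0]) auto
  have ne: "r ` D \<noteq> {}" using D by auto
  have mle: "\<And>y. y \<in> D \<Longrightarrow> m \<le> r y" unfolding m_def using bdd by (auto intro: cInf_lower)
  have midD: "\<And>a b. a \<in> D \<Longrightarrow> b \<in> D \<Longrightarrow> (1/2) *\<^sub>R (a + b) \<in> D"
  proof -
    fix a b assume "a \<in> D" "b \<in> D"
    then have "(1/2) *\<^sub>R a + (1/2) *\<^sub>R b \<in> D" using D(3) by (intro convexD) auto
    then show "(1/2) *\<^sub>R (a + b) \<in> D" by (simp add: scaleR_right_distrib)
  qed
  have "\<forall>n::nat. \<exists>y\<in>D. r y < m + 1 / (real n + 1)"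
  proof
    fix n :: nat
    have "Inf (r ` D) < m + 1 / (real n + 1)" unfolding m_def by simp
    then show "\<exists>y\<in>D. r y < m + 1 / (real n + 1)"
      using cInf_less_iff[OF ne bdd] by auto
  qed
  then obtain ys where ys: "\<And>n. ys n \<in> D" "\<And>n. r (ys n) < m + 1 / (real n + 1)"
    by metis
  have dist_bd: "(norm (ys n - ys k))\<^sup>2 \<le> 2 * (1 / (real n + 1)) + 2 * (1 / (real k + 1))" for n k
  proof -
    have "m \<le> r ((1/2) *\<^sub>R (ys n + ys k))" using midD ys mle by blast
    also have "\<dots> \<le> (r (ys n) + r (ys k)) / 2 - (norm (ys n - ys k))\<^sup>2 / 4"
      using mid ys by blast
    finally show ?thesis using ys(2)[of n] ys(2)[of k] lin_aux by blast
  qed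
  have cauchy: "Cauchy ys"
  proof (rule CauchyI)
    fix e :: real assume e: "0 < e"
    obtain N :: nat where N: "1 / (real N + 1) < e\<^sup>2 / 4"
      using e arch_aux[of "e\<^sup>2 / 4"] by auto
    show "\<exists>M. \<forall>m\<ge>M. \<forall>n\<ge>M. norm (ys m - ys n) < e"
    proof (intro exI allI impI)
      fix a b assume ab: "N \<le> a" "N \<le> b"
      have "1 / (real a + 1) \<le> 1 / (real N + 1)" "1 / (real b + 1) \<le> 1 / (real N + 1)"
        using ab by (auto simp: divide_simps)
      then have "(norm (ys a - ys b))\<^sup>2 < e\<^sup>2" using dist_bd[of a b] N by linarith
      then show "norm (ys a - ys b) < e" by (rule power2_less_imp_less) (use e in auto)
    qed
  qed
  then obtain c where c: "ys \<longlonglongrightarrow> c" using Cauchy_convergent_iff convergent_def by blast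
  have cD: "c \<in> D" using closed_sequentially[OF D(2) ys(1) c] .
  obtain K where K: "\<forall>b\<in>D. r c \<le> r b + K * norm (c - b)" using cont[OF cD] by blast
  have "r c \<le> m"
  proof (rule ccontr)
    assume "\<not> r c \<le> m"
    then have d: "0 < r c - m" by simp
    define \<delta> where "\<delta> = r c - m"
    have "\<forall>\<^sub>F n in sequentially. norm (c - ys n) < \<delta> / (2 * (\<bar>K\<bar> + 1))"
    proof -
      have "(\<lambda>n. ys n - c) \<longlonglongrightarrow> 0" using c by (simp add: LIM_zero)
      then have "(\<lambda>n. norm (ys n - c)) \<longlonglongrightarrow> 0" by (simp add: tendsto_norm_zero)
      moreover have "0 < \<delta> / (2 * (\<bar>K\<bar> + 1))" using d \<delta>_def by simp
      ultimately have "\<forall>\<^sub>F n in sequentially. norm (ys n - c) < \<delta> / (2 * (\<bar>K\<bar> + 1))"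
        by (rule order_tendstoD(2))
      then show ?thesis by (simp add: norm_minus_commute)
    qed
    moreover have "\<forall>\<^sub>F n in sequentially. 1 / (real n + 1) < \<delta> / 2"
    proof -
      have "(\<lambda>n. 1 / (real n + 1)) \<longlonglongrightarrow> 0" by (rule inv_suc_lim)
      then show ?thesis using d \<delta>_def by (intro order_tendstoD(2)) auto
    qed
    ultimately obtain n where n: "norm (c - ys n) < \<delta> / (2 * (\<bar>K\<bar> + 1))" "1 / (real n + 1) < \<delta> / 2"
      by (metis (mono_tags, lifting) eventually_conj_iff eventually_sequentially order.refl)
    have "K * norm (c - ys n) \<le> (\<bar>K\<bar> + 1) * norm (c - ys n)"
      by (intro mult_right_mono) auto
    also have "\<dots> \<le> (\<bar>K\<bar> + 1) * (\<delta> / (2 * (\<bar>K\<bar> + 1)))"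
      using n(1) by (intro mult_left_mono) auto
    also have "\<dots> = \<delta> / 2" by (simp add: field_simps)
    finally have "K * norm (c - ys n) \<le> \<delta> / 2" .
    moreover have "r c \<le> r (ys n) + K * norm (c - ys n)" using K ys(1)[of n] by blast
    ultimately have "r c < m + \<delta>" using ys(2)[of n] n(2) by linarith
    then show False using \<delta>_def by simp
  qed
  show ?thesis
  proof (intro bexI[OF _ cD] ballI)
    fix y assume "y \<in> D"
    then have "m \<le> r y" using mle by blast
    then show "r c \<le> r y" using \<open>r c \<le> m\<close> by linarith
  qed
qed


lemma proj_exists:
  fixes D :: "'a::{real_inner,complete_space} set"
  assumes D: "D \<noteq> {}" "closed D" "convex D"
  shows "metric_proj D x \<in> D \<and> (\<forall>z\<in>D. norm (x - metric_proj D x) \<le> norm (x - z))"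
proof -
  have "\<exists>c\<in>D. \<forall>y\<in>D. (norm (x - c))\<^sup>2 \<le> (norm (x - y))\<^sup>2"
  proof (rule min_exists[OF D])
    show "(norm (x - (1/2) *\<^sub>R (a + b)))\<^sup>2 \<le>
        ((norm (x - a))\<^sup>2 + (norm (x - b))\<^sup>2) / 2 - (norm (a - b))\<^sup>2 / 4" for a b
      by (subst mid_identity) simp
    show "\<exists>K. \<forall>b\<in>D. (norm (x - a))\<^sup>2 \<le> (norm (x - b))\<^sup>2 + K * norm (a - b)" for a
      using norm_sq_diff_bound[of x a] by (intro exI[of _ "2 * norm (x - a)"]) (auto simp: mult.assoc)
  qed auto
  then have "\<exists>c. c \<in> D \<and> (\<forall>y\<in>D. norm (x - c) \<le> norm (x - y))"
    by (meson norm_ge_zero power2_le_imp_le)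
  then show ?thesis unfolding metric_proj_def by (rule someI_ex)
qed

lemma proj_in:
  fixes D :: "'a::{real_inner,complete_space} set"
  assumes D: "D \<noteq> {}" "closed D" "convex D"
  shows "metric_proj D x \<in> D"
  using proj_exists[OF D] by blast

lemma proj_char:
  fixes D :: "'a::{real_inner,complete_space} set"
  assumes D: "D \<noteq> {}" "closed D" "convex D" and z: "z \<in> D"
  shows "inner (x - metric_proj D x) (z - metric_proj D x) \<le> 0"
proof (rule ccontr)
  define p where "p = metric_proj D x"
  have pD: "p \<in> D" and pmin: "\<forall>z\<in>D. norm (x - p) \<le> norm (x - z)"
    using proj_exists[OF D, of x] p_def by auto
  assume "\<not> inner (x - metric_proj D x) (z - metric_proj D x) \<le> 0"
  then have s: "0 < inner (x - p) (z - p)" unfolding p_def by simp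
  define s where "s = inner (x - p) (z - p)"
  have zp: "z - p \<noteq> 0" using s by auto
  then have nz: "0 < (norm (z - p))\<^sup>2" by simp
  define t where "t = min 1 (s / (norm (z - p))\<^sup>2)"
  have t0: "0 < t" using s nz s_def t_def by simp
  have t1: "t \<le> 1" unfolding t_def by simp
  have ts: "t * (norm (z - p))\<^sup>2 \<le> s" using nz unfolding t_def
    by (metis min.cobounded2 mult.commute pos_le_divide_eq)
  have "p + t *\<^sub>R (z - p) \<in> D"
  proof -
    have "(1 - t) *\<^sub>R p + t *\<^sub>R z \<in> D" using D(3) pD z t0 t1 by (intro convexD) auto
    moreover have "(1 - t) *\<^sub>R p + t *\<^sub>R z = p + t *\<^sub>R (z - p)" by (simp add: algebra_simps)
    ultimately show ?thesis by simp
  qed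
  then have "norm (x - p) \<le> norm (x - (p + t *\<^sub>R (z - p)))" using pmin by blast
  then have "(norm (x - p))\<^sup>2 \<le> (norm ((x - p) - t *\<^sub>R (z - p)))\<^sup>2"
    by (simp add: power_mono algebra_simps)
  also have "\<dots> = (norm (x - p))\<^sup>2 - 2 * t * s + t * (t * (norm (z - p))\<^sup>2)"
    unfolding s_def power2_norm_eq_inner
    by (simp add: inner_diff_left inner_diff_right inner_commute algebra_simps)
  finally have "2 * t * s \<le> t * (t * (norm (z - p))\<^sup>2)" by simp
  then have "2 * s \<le> t * (norm (z - p))\<^sup>2" using t0 by (simp add: mult.assoc)
  then show False using ts s s_def by linarith
qed

lemma proj_unique:
  fixes D :: "'a::{real_inner,complete_space} set"
  assumes D: "D \<noteq> {}" "closed D" "convex D" and p: "p \<in> D"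
    and c: "\<And>z. z \<in> D \<Longrightarrow> inner (x - p) (z - p) \<le> 0"
  shows "metric_proj D x = p"
proof -
  define q where "q = metric_proj D x"
  have q: "q \<in> D" unfolding q_def using proj_in[OF D] .
  have 1: "inner (x - p) (q - p) \<le> 0" using c q by blast
  have 2: "inner (x - q) (p - q) \<le> 0" using proj_char[OF D p] q_def by simp
  have "inner (q - p) (q - p) = inner (x - p) (q - p) + inner (x - q) (p - q)"
    by (simp add: inner_diff_left inner_diff_right inner_commute algebra_simps)
  then have "inner (q - p) (q - p) \<le> 0" using 1 2 by linarith
  then have "inner (q - p) (q - p) = 0" using inner_ge_zero[of "q-p"] by linarith
  then have "q = p" by simp
  then show ?thesis unfolding q_def .
qed

lemma proj_firm:
  fixes D :: "'a::{real_inner,complete_space} set"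
  assumes D: "D \<noteq> {}" "closed D" "convex D"
  shows "(norm (metric_proj D u - metric_proj D v))\<^sup>2 \<le>
     inner (u - v) (metric_proj D u - metric_proj D v)"
proof -
  define a where "a = metric_proj D u"
  define b where "b = metric_proj D v"
  have 1: "inner (u - a) (b - a) \<le> 0" unfolding a_def b_def using proj_char[OF D proj_in[OF D]] .
  have 2: "inner (v - b) (a - b) \<le> 0" unfolding a_def b_def using proj_char[OF D proj_in[OF D]] .
  have "inner (u - v) (a - b) - (norm (a - b))\<^sup>2 = - inner (u - a) (b - a) - inner (v - b) (a - b)"
    unfolding power2_norm_eq_inner
    by (simp add: inner_diff_left inner_diff_right inner_commute algebra_simps)
  then show ?thesis using 1 2 unfolding a_def b_def by linarith
qed

lemma proj_firm2:
  fixes D :: "'a::{real_inner,complete_space} set"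
  assumes D: "D \<noteq> {}" "closed D" "convex D"
  shows "(norm (metric_proj D u - metric_proj D v))\<^sup>2 \<le>
     (norm (u - v))\<^sup>2 - (norm ((u - metric_proj D u) - (v - metric_proj D v)))\<^sup>2"
proof -
  define a where "a = metric_proj D u"
  define b where "b = metric_proj D v"
  have f: "(norm (a - b))\<^sup>2 \<le> inner (u - v) (a - b)" unfolding a_def b_def by (rule proj_firm[OF D])
  have "(norm ((u - a) - (v - b)))\<^sup>2 = (norm (u - v))\<^sup>2 - 2 * inner (u - v) (a - b) + (norm (a - b))\<^sup>2"
    unfolding power2_norm_eq_inner
    by (simp add: inner_diff_left inner_diff_right inner_commute algebra_simps)
  then show ?thesis using f unfolding a_def b_def by linarith
qed

lemma proj_nonexp:
  fixes D :: "'a::{real_inner,complete_space} set"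
  assumes D: "D \<noteq> {}" "closed D" "convex D"
  shows "norm (metric_proj D u - metric_proj D v) \<le> norm (u - v)"
proof -
  have "(norm (metric_proj D u - metric_proj D v))\<^sup>2 \<le> (norm (u - v))\<^sup>2"
    by (rule order_trans[OF proj_firm2[OF D]]) simp
  then show ?thesis by (rule power2_le_imp_le) simp
qed


lemma ism_step:
  fixes h :: "'a::real_inner \<Rightarrow> 'a"
  assumes h: "inverse_strongly_monotone \<beta> h" and that: "0 \<le> lam"
  shows "(norm ((v - lam *\<^sub>R h v) - (w - lam *\<^sub>R h w)))\<^sup>2 \<le>
     (norm (v - w))\<^sup>2 - lam * (2 * \<beta> - lam) * (norm (h v - h w))\<^sup>2"
proof -
  have i: "\<beta> * (norm (h v - h w))\<^sup>2 \<le> inner (h v - h w) (v - w)"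
    using h unfolding inverse_strongly_monotone_def by blast
  have "(norm ((v - lam *\<^sub>R h v) - (w - lam *\<^sub>R h w)))\<^sup>2 =
      (norm (v - w))\<^sup>2 - 2 * lam * inner (h v - h w) (v - w) + lam * lam * (norm (h v - h w))\<^sup>2"
    unfolding power2_norm_eq_inner
    by (simp add: inner_diff_left inner_diff_right inner_commute algebra_simps)
  moreover have "2 * lam * (\<beta> * (norm (h v - h w))\<^sup>2) \<le> 2 * lam * inner (h v - h w) (v - w)"
    using i that by (intro mult_left_mono) auto
  ultimately show ?thesis by (simp add: algebra_simps)
qed

lemma ism_nonexp:
  fixes h :: "'a::real_inner \<Rightarrow> 'a"
  assumes h: "inverse_strongly_monotone \<beta> h" and l: "0 \<le> lam" "lam \<le> 2 * \<beta>"
  shows "norm ((v - lam *\<^sub>R h v) - (w - lam *\<^sub>R h w)) \<le> norm (v - w)"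
proof -
  have "0 \<le> lam * (2 * \<beta> - lam) * (norm (h v - h w))\<^sup>2" using l by simp
  then have "(norm ((v - lam *\<^sub>R h v) - (w - lam *\<^sub>R h w)))\<^sup>2 \<le> (norm (v - w))\<^sup>2"
    using ism_step[OF h l(1), of v w] by linarith
  then show ?thesis by (rule power2_le_imp_le) simp
qed

lemma op_nonexp:
  fixes D :: "'a::{real_inner,complete_space} set"
  assumes D: "D \<noteq> {}" "closed D" "convex D"
    and h: "inverse_strongly_monotone \<beta> h" and l: "0 \<le> lam" "lam \<le> 2 * \<beta>"
  shows "norm (metric_proj D (v - lam *\<^sub>R h v) - metric_proj D (w - lam *\<^sub>R h w)) \<le> norm (v - w)"
  using proj_nonexp[OF D] ism_nonexp[OF h l] order_trans by blast

lemma fix_iff_SOL: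
  fixes D :: "'a::{real_inner,complete_space} set"
  assumes D: "D \<noteq> {}" "closed D" "convex D" and l: "0 < lam"
  shows "metric_proj D (v - lam *\<^sub>R h v) = v \<longleftrightarrow> v \<in> SOL D h"
proof
  assume e: "metric_proj D (v - lam *\<^sub>R h v) = v"
  have vD: "v \<in> D" using proj_in[OF D, of "v - lam *\<^sub>R h v"] e by simp
  have "0 \<le> inner (h v) (z - v)" if z: "z \<in> D" for z
  proof -
    have "inner ((v - lam *\<^sub>R h v) - v) (z - v) \<le> 0"
      using proj_char[OF D z, of "v - lam *\<^sub>R h v"] e by simp
    then have "- lam * inner (h v) (z - v) \<le> 0" by (simp add: inner_diff_left)
    then show ?thesis using l by (simp add: mult_le_0_iff zero_le_mult_iff)
  qed
  then show "v \<in> SOL D h" unfolding SOL_def using vD by blast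
next
  assume "v \<in> SOL D h"
  then have vD: "v \<in> D" and s: "\<And>z. z \<in> D \<Longrightarrow> 0 \<le> inner (h v) (z - v)"
    unfolding SOL_def by auto
  show "metric_proj D (v - lam *\<^sub>R h v) = v"
  proof (rule proj_unique[OF D vD])
    fix z assume "z \<in> D"
    then have "0 \<le> lam * inner (h v) (z - v)" using s l by simp
    then show "inner ((v - lam *\<^sub>R h v) - v) (z - v) \<le> 0" by (simp add: inner_diff_left)
  qed
qed

lemma op_step:
  fixes D :: "'a::{real_inner,complete_space} set"
  assumes D: "D \<noteq> {}" "closed D" "convex D"
    and h: "inverse_strongly_monotone \<beta> h" and l: "0 < lam"
    and q: "q \<in> SOL D h"
  shows "(norm (metric_proj D (v - lam *\<^sub>R h v) - q))\<^sup>2 \<le>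
     (norm (v - q))\<^sup>2 - lam * (2 * \<beta> - lam) * (norm (h v - h q))\<^sup>2
       - (norm ((v - lam *\<^sub>R h v - metric_proj D (v - lam *\<^sub>R h v)) + lam *\<^sub>R h q))\<^sup>2"
proof -
  have pq: "metric_proj D (q - lam *\<^sub>R h q) = q" using fix_iff_SOL[OF D l] q by blast
  have "(norm (metric_proj D (v - lam *\<^sub>R h v) - metric_proj D (q - lam *\<^sub>R h q)))\<^sup>2 \<le>
     (norm ((v - lam *\<^sub>R h v) - (q - lam *\<^sub>R h q)))\<^sup>2
     - (norm (((v - lam *\<^sub>R h v) - metric_proj D (v - lam *\<^sub>R h v))
           - ((q - lam *\<^sub>R h q) - metric_proj D (q - lam *\<^sub>R h q))))\<^sup>2"
    by (rule proj_firm2[OF D])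
  also have "((v - lam *\<^sub>R h v) - metric_proj D (v - lam *\<^sub>R h v))
           - ((q - lam *\<^sub>R h q) - metric_proj D (q - lam *\<^sub>R h q))
       = (v - lam *\<^sub>R h v - metric_proj D (v - lam *\<^sub>R h v)) + lam *\<^sub>R h q"
    unfolding pq by simp
  finally show ?thesis using pq ism_step[OF h, of lam v q] l by simp
qed

lemma fix_convex:
  fixes T :: "'a::real_inner \<Rightarrow> 'a"
  assumes ne: "\<And>a b. norm (T a - T b) \<le> norm (a - b)"
  shows "convex {x. T x = x}"
proof (rule convexI)
  fix a b :: 'a and u v :: real
  assume a: "a \<in> {x. T x = x}" and b: "b \<in> {x. T x = x}" and uv: "0 \<le> u" "0 \<le> v" "u + v = 1"
  define w where "w = u *\<^sub>R a + v *\<^sub>R b"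
  have Ta: "T a = a" and Tb: "T b = b" using a b by auto
  have u: "u = 1 - v" using uv by simp
  have wa: "w - a = v *\<^sub>R (b - a)" unfolding w_def u by (simp add: algebra_simps)
  have wb: "w - b = u *\<^sub>R (a - b)" unfolding w_def u by (simp add: algebra_simps)
  have X: "norm (T w - a) \<le> v * norm (a - b)"
    using ne[of w a] Ta wa uv by (simp add: norm_minus_commute)
  have Y: "norm (T w - b) \<le> u * norm (a - b)"
    using ne[of w b] Tb wb uv by simp
  have X2: "(norm (T w - a))\<^sup>2 \<le> (v * norm (a - b))\<^sup>2" using X by (intro power_mono) auto
  have Y2: "(norm (T w - b))\<^sup>2 \<le> (u * norm (a - b))\<^sup>2" using Y by (intro power_mono) auto
  have tw: "T w - w = u *\<^sub>R (T w - a) + v *\<^sub>R (T w - b)"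
    unfolding w_def u by (simp add: algebra_simps)
  have "(norm (T w - w))\<^sup>2 = u * (norm (T w - a))\<^sup>2 + v * (norm (T w - b))\<^sup>2
       - u * v * (norm ((T w - a) - (T w - b)))\<^sup>2"
    unfolding tw by (rule conv_identity[OF uv(3)])
  also have "(T w - a) - (T w - b) = b - a" by simp
  also have "u * (norm (T w - a))\<^sup>2 + v * (norm (T w - b))\<^sup>2 - u * v * (norm (b - a))\<^sup>2
      \<le> u * (v * norm (a - b))\<^sup>2 + v * (u * norm (a - b))\<^sup>2 - u * v * (norm (b - a))\<^sup>2"
    using X2 Y2 uv by (intro diff_right_mono add_mono mult_left_mono) auto
  also have "\<dots> = u * v * (u + v - 1) * (norm (a - b))\<^sup>2"
    by (simp add: norm_minus_commute power2_eq_square algebra_simps)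
  also have "\<dots> = 0" using uv by simp
  finally have "(norm (T w - w))\<^sup>2 \<le> 0" .
  then have "T w = w" by simp
  then show "u *\<^sub>R a + v *\<^sub>R b \<in> {x. T x = x}" unfolding w_def by simp
qed

lemma fix_closed:
  fixes T :: "'a::real_normed_vector \<Rightarrow> 'a"
  assumes ne: "\<And>a b. norm (T a - T b) \<le> norm (a - b)"
  shows "closed {x. T x = x}"
proof -
  have "continuous_on UNIV T"
    unfolding continuous_on_iff dist_norm using ne by (meson le_less_trans)
  then show ?thesis
    using closed_Collect_eq[of T "\<lambda>x. x"] by (simp add: continuous_on_id)
qed


definition ls :: "(nat \<Rightarrow> real) \<Rightarrow> real" where
  "ls a = Inf {v. eventually (\<lambda>j. a j \<le> v) sequentially}"

lemma ls_set_bdd: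
  fixes a :: "nat \<Rightarrow> real"
  assumes "\<And>j. 0 \<le> a j"
  shows "bdd_below {v. eventually (\<lambda>j. a j \<le> v) sequentially}"
proof (rule bdd_belowI[of _ 0])
  fix v assume "v \<in> {v. eventually (\<lambda>j. a j \<le> v) sequentially}"
  then obtain N where "\<forall>n\<ge>N. a n \<le> v" by (auto simp: eventually_sequentially)
  then have "a N \<le> v" by simp
  then show "0 \<le> v" using assms[of N] by linarith
qed

lemma ls_set_ne:
  fixes a :: "nat \<Rightarrow> real"
  assumes "\<And>j. a j \<le> B"
  shows "{v. eventually (\<lambda>j. a j \<le> v) sequentially} \<noteq> {}"
  using assms by (auto intro!: exI[of _ B])

lemma ls_upper:
  assumes "\<And>j. 0 \<le> a j" "\<And>j. a j \<le> B" "0 < \<epsilon>"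
  shows "eventually (\<lambda>j. a j < ls a + \<epsilon>) sequentially"
proof -
  have "Inf {v. eventually (\<lambda>j. a j \<le> v) sequentially} < ls a + \<epsilon>"
    unfolding ls_def using assms(3) by simp
  then obtain v where v: "eventually (\<lambda>j. a j \<le> v) sequentially" "v < ls a + \<epsilon>"
    using cInf_less_iff[OF ls_set_ne[of a B] ls_set_bdd[of a]] assms by auto
  show ?thesis using v(1) by (rule eventually_mono) (use v(2) in linarith)
qed

lemma ls_least:
  assumes "\<And>j. 0 \<le> a j" "eventually (\<lambda>j. a j \<le> v) sequentially"
  shows "ls a \<le> v"
  unfolding ls_def using assms by (intro cInf_lower ls_set_bdd) auto

lemma ls_nonneg:
  assumes "\<And>j. 0 \<le> a j" "\<And>j. a j \<le> B"
  shows "0 \<le> ls a"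
proof -
  have "\<And>v. v \<in> {v. eventually (\<lambda>j. a j \<le> v) sequentially} \<Longrightarrow> 0 \<le> v"
    using ls_set_bdd[of a] assms(1)
    by (metis (no_types, lifting) eventually_sequentially mem_Collect_eq order.refl order_trans)
  then show ?thesis unfolding ls_def
    by (intro cInf_greatest ls_set_ne[of a B]) (use assms in auto)
qed

lemma ls_le:
  assumes a0: "\<And>j. 0 \<le> a j" and b: "\<And>j. 0 \<le> b j" "\<And>j. b j \<le> B"
    and c: "\<And>j. 0 \<le> c j" "\<And>j. c j \<le> B'" and e: "e \<longlonglongrightarrow> 0"
    and st: "0 \<le> s" "0 \<le> t" and le: "\<And>j. a j \<le> s * b j + t * c j + d + e j"
  shows "ls a \<le> s * ls b + t * ls c + d"
proof (rule ccontr)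
  assume nt: "\<not> ls a \<le> s * ls b + t * ls c + d"
  define \<delta> where "\<delta> = ls a - (s * ls b + t * ls c + d)"
  have d0: "0 < \<delta>" using nt \<delta>_def by simp
  define \<epsilon> where "\<epsilon> = \<delta> / (s + t + 2)"
  have e0: "0 < \<epsilon>" using d0 st \<epsilon>_def by simp
  have de: "(s + t + 1) * \<epsilon> < \<delta>"
  proof -
    have "(s + t + 1) * \<epsilon> < (s + t + 2) * \<epsilon>" using e0 by simp
    also have "\<dots> = \<delta>" using st \<epsilon>_def by simp
    finally show ?thesis .
  qed
  have ev: "eventually (\<lambda>j. b j < ls b + \<epsilon> \<and> c j < ls c + \<epsilon> \<and> e j < \<epsilon>) sequentially"
    using ls_upper[of b B, OF b e0] ls_upper[of c B', OF c e0] order_tendstoD(2)[OF e e0]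
    by (simp add: eventually_conj_iff)
  have "eventually (\<lambda>j. a j \<le> s * ls b + t * ls c + d + (s + t + 1) * \<epsilon>) sequentially"
    using ev
  proof (rule eventually_mono)
    fix j assume j: "b j < ls b + \<epsilon> \<and> c j < ls c + \<epsilon> \<and> e j < \<epsilon>"
    have "s * b j \<le> s * (ls b + \<epsilon>)" using j st by (intro mult_left_mono) auto
    moreover have "t * c j \<le> t * (ls c + \<epsilon>)" using j st by (intro mult_left_mono) auto
    ultimately show "a j \<le> s * ls b + t * ls c + d + (s + t + 1) * \<epsilon>"
      using le[of j] j by (simp add: algebra_simps)
  qed
  then have "ls a \<le> s * ls b + t * ls c + d + (s + t + 1) * \<epsilon>" by (rule ls_least[OF a0])
  then show False using de \<delta>_def by linarith
qed


lemma core: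
  fixes u :: "nat \<Rightarrow> 'a::{real_inner,complete_space}" and T :: "'a \<Rightarrow> 'a"
  assumes bnd: "\<And>j. norm (u j) \<le> M"
    and nexp: "\<And>a b. norm (T a - T b) \<le> norm (a - b)"
    and asreg: "(\<lambda>j. norm (u j - T (u j))) \<longlonglongrightarrow> 0"
    and pineq: "\<And>c. T c = c \<Longrightarrow> \<exists>e. e \<longlonglongrightarrow> 0 \<and> (\<forall>j. inner (u j - p) (c - p) \<le> e j)"
    and eps: "0 < \<epsilon>" "\<And>j. \<epsilon> \<le> inner (u j - p) z"
  shows False
proof -
  define r where "r y = ls (\<lambda>j. (norm (u j - y))\<^sup>2)" for y
  have M0: "0 \<le> M" using bnd[of 0] norm_ge_zero order_trans by blast
  have bd: "(norm (u j - y))\<^sup>2 \<le> (M + norm y)\<^sup>2" for j y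
  proof -
    have "norm (u j - y) \<le> M + norm y"
      using norm_triangle_ineq4[of "u j" y] bnd[of j] by linarith
    then show ?thesis by (intro power_mono) auto
  qed
  have LS: "r y \<le> s * r y1 + t * r y2 + d"
    if "e \<longlonglongrightarrow> 0" "0 \<le> s" "0 \<le> t"
      "\<And>j. (norm (u j - y))\<^sup>2 \<le> s * (norm (u j - y1))\<^sup>2 + t * (norm (u j - y2))\<^sup>2 + d + e j"
    for y y1 y2 s t d e
    unfolding r_def
    by (rule ls_le[where B = "(M + norm y1)\<^sup>2" and B' = "(M + norm y2)\<^sup>2" and e = e])
       (use that bd in auto)
  have rnn: "0 \<le> r y" for y unfolding r_def by (rule ls_nonneg[OF _ bd]) simp
  have mid: "r ((1/2) *\<^sub>R (a + b)) \<le> (r a + r b) / 2 - (norm (a - b))\<^sup>2 / 4" for a b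
  proof -
    have "r ((1/2) *\<^sub>R (a + b)) \<le> (1/2) * r a + (1/2) * r b + (- (norm (a - b))\<^sup>2 / 4)"
      by (rule LS[where e = "\<lambda>_. 0"]) (auto simp: mid_identity)
    then show ?thesis by (simp add: add_divide_distrib)
  qed
  have cont: "\<exists>K. \<forall>b\<in>UNIV. r a \<le> r b + K * norm (a - b)" for a
  proof (intro exI ballI)
    fix b
    have "r a \<le> 1 * r b + 0 * r b + 2 * (M + norm a) * norm (a - b)"
    proof (rule LS[where e = "\<lambda>_. 0"])
      fix j
      have "(norm (u j - a))\<^sup>2 \<le> (norm (u j - b))\<^sup>2 + 2 * norm (u j - a) * norm (a - b)"
        by (rule norm_sq_diff_bound)
      also have "norm (u j - a) \<le> M + norm a"
        using norm_triangle_ineq4[of "u j" a] bnd[of j] by linarith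
      then have "2 * norm (u j - a) * norm (a - b) \<le> 2 * (M + norm a) * norm (a - b)"
        by (intro mult_right_mono) auto
      finally show "(norm (u j - a))\<^sup>2 \<le> 1 * (norm (u j - b))\<^sup>2 + 0 * (norm (u j - b))\<^sup>2
          + 2 * (M + norm a) * norm (a - b) + 0" by simp
    qed auto
    then show "r a \<le> r b + 2 * (M + norm a) * norm (a - b)" by simp
  qed
  obtain c where cmin: "\<And>y. r c \<le> r y"
    using min_exists[of UNIV r] rnn mid cont by auto
  have rT: "r (T c) \<le> r c"
  proof -
    have "r (T c) \<le> 1 * r c + 0 * r c + 0"
    proof (rule LS[where e = "\<lambda>j. 2 * (M + norm (T c)) * norm (u j - T (u j))"])
      show "(\<lambda>j. 2 * (M + norm (T c)) * norm (u j - T (u j))) \<longlonglongrightarrow> 0"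
        using tendsto_mult_right_zero[OF asreg] by (simp add: mult.assoc)
      fix j
      have "norm (u j - T c) \<le> norm (u j - c) + norm (u j - T (u j))"
      proof -
        have "norm (u j - T c) \<le> norm (u j - T (u j)) + norm (T (u j) - T c)"
          using norm_triangle_ineq[of "u j - T (u j)" "T (u j) - T c"] by simp
        then show ?thesis using nexp[of "u j" c] by linarith
      qed
      then have "(norm (u j - T c))\<^sup>2 \<le> (norm (u j - c))\<^sup>2 + 2 * norm (u j - T c) * norm (u j - T (u j))"
        by (intro sq_tri_aux) auto
      also have "norm (u j - T c) \<le> M + norm (T c)"
        using norm_triangle_ineq4[of "u j" "T c"] bnd[of j] by linarith
      then have "2 * norm (u j - T c) * norm (u j - T (u j)) \<le> 2 * (M + norm (T c)) * norm (u j - T (u j))"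
        by (intro mult_right_mono) auto
      finally show "(norm (u j - T c))\<^sup>2 \<le> 1 * (norm (u j - c))\<^sup>2 + 0 * (norm (u j - c))\<^sup>2 + 0
          + 2 * (M + norm (T c)) * norm (u j - T (u j))" by simp
    qed auto
    then show ?thesis by simp
  qed
  have Tc: "T c = c"
  proof -
    have "r c \<le> r ((1/2) *\<^sub>R (c + T c))" by (rule cmin)
    also have "\<dots> \<le> (r c + r (T c)) / 2 - (norm (c - T c))\<^sup>2 / 4" by (rule mid)
    finally have "(norm (c - T c))\<^sup>2 \<le> 0" using rT by argo
    then show ?thesis by simp
  qed
  obtain e where e: "e \<longlonglongrightarrow> 0" "\<And>j. inner (u j - p) (c - p) \<le> e j" using pineq[OF Tc] by blast
  have "r p \<le> 1 * r c + 0 * r c + (- (norm (p - c))\<^sup>2)"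
  proof (rule LS[where e = "\<lambda>j. 2 * e j"])
    show "(\<lambda>j. 2 * e j) \<longlonglongrightarrow> 0" using tendsto_mult_right_zero[OF e(1), of 2] by simp
    fix j
    have "(norm (u j - c))\<^sup>2 = (norm (u j - p))\<^sup>2 - 2 * inner (u j - p) (c - p) + (norm (p - c))\<^sup>2"
      unfolding power2_norm_eq_inner
      by (simp add: inner_diff_left inner_diff_right inner_commute algebra_simps)
    then show "(norm (u j - p))\<^sup>2 \<le> 1 * (norm (u j - c))\<^sup>2 + 0 * (norm (u j - c))\<^sup>2
        + (- (norm (p - c))\<^sup>2) + 2 * e j" using e(2)[of j] by simp
  qed auto
  then have pmin: "r p \<le> r y" for y using cmin[of y] by (smt (verit) zero_le_power2)
  have z0: "z \<noteq> 0" using eps by auto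
  then have nz: "0 < (norm z)\<^sup>2" by simp
  define t where "t = \<epsilon> / (norm z)\<^sup>2"
  have t0: "0 < t" using eps nz t_def by simp
  have "r (p + t *\<^sub>R z) \<le> 1 * r p + 0 * r p + (- 2 * t * \<epsilon> + t * t * (norm z)\<^sup>2)"
  proof (rule LS[where e = "\<lambda>_. 0"])
    fix j
    have "(norm (u j - (p + t *\<^sub>R z)))\<^sup>2 = (norm (u j - p))\<^sup>2 - 2 * t * inner (u j - p) z + t * t * (norm z)\<^sup>2"
      unfolding power2_norm_eq_inner
      by (simp add: inner_diff_left inner_diff_right inner_add_left inner_add_right inner_commute algebra_simps)
    moreover have "2 * t * \<epsilon> \<le> 2 * t * inner (u j - p) z" using eps(2)[of j] t0 by simp
    ultimately show "(norm (u j - (p + t *\<^sub>R z)))\<^sup>2 \<le> 1 * (norm (u j - p))\<^sup>2 + 0 * (norm (u j - p))\<^sup>2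
        + (- 2 * t * \<epsilon> + t * t * (norm z)\<^sup>2) + 0" by simp
  qed auto
  moreover have "- 2 * t * \<epsilon> + t * t * (norm z)\<^sup>2 = - t * \<epsilon>"
    using nz unfolding t_def by (simp add: field_simps power2_eq_square)
  moreover have "0 < t * \<epsilon>" using t0 eps by simp
  ultimately have "r (p + t *\<^sub>R z) < r p" by linarith
  then show False using pmin[of "p + t *\<^sub>R z"] by simp
qed


lemma sq_to_zero:
  fixes a D :: "nat \<Rightarrow> real"
  assumes a0: "\<And>k. 0 \<le> a k" and c: "0 < c" and le: "\<And>k. c * (a k)\<^sup>2 \<le> D k" and D: "D \<longlonglongrightarrow> 0"
  shows "a \<longlonglongrightarrow> 0"
proof (rule tendsto_sandwich[where f = "\<lambda>_. 0" and h = "\<lambda>k. sqrt (D k / c)"])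
  show "\<forall>\<^sub>F n in sequentially. 0 \<le> a n" using a0 by simp
  show "\<forall>\<^sub>F n in sequentially. a n \<le> sqrt (D n / c)"
  proof (rule always_eventually, rule allI)
    fix k
    have "(a k)\<^sup>2 \<le> D k / c" using le[of k] c by (simp add: field_simps mult.commute)
    then show "a k \<le> sqrt (D k / c)" using a0[of k] real_le_rsqrt by blast
  qed
  show "(\<lambda>n. 0) \<longlonglongrightarrow> (0::real)" by simp
  have "(\<lambda>k. sqrt (D k / c)) \<longlonglongrightarrow> sqrt (0 / c)"
    by (intro tendsto_real_sqrt tendsto_divide D) (use c in auto)
  then show "(\<lambda>k. sqrt (D k / c)) \<longlonglongrightarrow> 0" by simp
qed

lemma two_step:
  fixes C Q :: "'a::{real_inner, complete_space} set"
  assumes C: "C \<noteq> {}" "closed C" "convex C"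
    and Q: "Q \<noteq> {}" "closed Q" "convex Q"
    and f: "inverse_strongly_monotone \<alpha>1 f"
    and g: "inverse_strongly_monotone \<alpha>2 g"
    and lam: "0 < lam"
    and q: "q \<in> SOL C f \<inter> SOL Q g"
    and w: "w = metric_proj Q (v - lam *\<^sub>R g v)"
  shows "(norm (metric_proj C (w - lam *\<^sub>R f w) - q))\<^sup>2 \<le> (norm (v - q))\<^sup>2
     - (lam * (2 * \<alpha>2 - lam) * (norm (g v - g q))\<^sup>2
     + (norm ((v - lam *\<^sub>R g v - w) + lam *\<^sub>R g q))\<^sup>2
     + lam * (2 * \<alpha>1 - lam) * (norm (f w - f q))\<^sup>2
     + (norm ((w - lam *\<^sub>R f w - metric_proj C (w - lam *\<^sub>R f w)) + lam *\<^sub>R f q))\<^sup>2)"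
  using op_step[OF C f lam, of q w] op_step[OF Q g lam, of q v] q w by simp


theorem theorem3p5:
  fixes C Q :: "'a::{real_inner, complete_space} set"
    and f g :: "'a \<Rightarrow> 'a"
    and \<alpha>1 \<alpha>2 lam :: real
    and x0 :: 'a
    and x y :: "nat \<Rightarrow> 'a"
  assumes C: "C \<noteq> {}" "closed C" "convex C"
    and Q: "Q \<noteq> {}" "closed Q" "convex Q"
    and f: "\<alpha>1 > 0" "inverse_strongly_monotone \<alpha>1 f"
    and g: "\<alpha>2 > 0" "inverse_strongly_monotone \<alpha>2 g"
    and lam: "0 < lam" "lam < 2 * min \<alpha>1 \<alpha>2"
    and Gamma: "SOL C f \<inter> SOL Q g \<noteq> {}"
    and x0: "x 0 = x0"
    and y_def: "\<And>k. y k = metric_proj Q (x k - lam *\<^sub>R g (x k))"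
    and x_step: "\<And>k. x (Suc k) = metric_proj C (y k - lam *\<^sub>R f (y k))"
  shows "\<exists>xs \<in> SOL C f \<inter> SOL Q g.
           weakly_converges x xs \<and>
           (\<lambda>k. metric_proj (SOL C f \<inter> SOL Q g) (x k)) \<longlonglongrightarrow> xs"
proof -
  define G where "G = SOL C f \<inter> SOL Q g"
  define A where "A v = metric_proj C (v - lam *\<^sub>R f v)" for v
  define B where "B v = metric_proj Q (v - lam *\<^sub>R g v)" for v
  define T where "T v = A (B v)" for v
  have l1: "lam < 2 * \<alpha>1" and l2: "lam < 2 * \<alpha>2" using lam by auto
  define c1 where "c1 = lam * (2 * \<alpha>1 - lam)"
  define c2 where "c2 = lam * (2 * \<alpha>2 - lam)"
  have c1: "0 < c1" and c2: "0 < c2" using l1 l2 lam unfolding c1_def c2_def by auto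
  have yB: "y k = B (x k)" for k unfolding B_def y_def ..
  have xT: "x (Suc k) = T (x k)" for k unfolding T_def A_def x_step yB ..
  have nexA: "norm (A a - A b) \<le> norm (a - b)" for a b
    unfolding A_def by (rule op_nonexp[OF C f(2)]) (use lam l1 in auto)
  have nexB: "norm (B a - B b) \<le> norm (a - b)" for a b
    unfolding B_def by (rule op_nonexp[OF Q g(2)]) (use lam l2 in auto)
  have nexp: "norm (T a - T b) \<le> norm (a - b)" for a b
    unfolding T_def using nexA[of "B a" "B b"] nexB[of a b] by linarith
  define RB where "RB v q = (v - lam *\<^sub>R g v - B v) + lam *\<^sub>R g q" for v q
  define RA where "RA v q = (v - lam *\<^sub>R f v - A v) + lam *\<^sub>R f q" for v q
  define Dq where "Dq v q = c2 * (norm (g v - g q))\<^sup>2 + (norm (RB v q))\<^sup>2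
      + c1 * (norm (f (B v) - f q))\<^sup>2 + (norm (RA (B v) q))\<^sup>2" for v q
  have Dq0: "0 \<le> Dq v q" for v q unfolding Dq_def using c1 c2 by simp
  have step: "(norm (T v - q))\<^sup>2 \<le> (norm (v - q))\<^sup>2 - Dq v q" if q: "q \<in> G" for v q
    using two_step[OF C Q f(2) g(2) lam(1), of q "B v" v] q
    unfolding Dq_def RA_def RB_def T_def A_def B_def c1_def c2_def G_def by simp
  have fej: "norm (T v - q) \<le> norm (v - q)" if q: "q \<in> G" for v q
  proof -
    have "(norm (T v - q))\<^sup>2 \<le> (norm (v - q))\<^sup>2" using step[OF q, of v] Dq0[of v q] by linarith
    then show ?thesis by (rule power2_le_imp_le) simp
  qed
  obtain q0 where q0: "q0 \<in> G" using Gamma G_def by blast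
  have fixA: "A v = v \<longleftrightarrow> v \<in> SOL C f" for v unfolding A_def by (rule fix_iff_SOL[OF C lam(1)])
  have fixB: "B v = v \<longleftrightarrow> v \<in> SOL Q g" for v unfolding B_def by (rule fix_iff_SOL[OF Q lam(1)])
  have fixT: "T v = v \<longleftrightarrow> v \<in> G" for v
  proof
    assume Tv: "T v = v"
    have "(norm (v - q0))\<^sup>2 \<le> (norm (v - q0))\<^sup>2 - Dq v q0" using step[OF q0, of v] Tv by simp
    then have D0: "Dq v q0 \<le> 0" by simp
    have "0 \<le> c2 * (norm (g v - g q0))\<^sup>2" "0 \<le> (norm (RB v q0))\<^sup>2"
      "0 \<le> c1 * (norm (f (B v) - f q0))\<^sup>2" "0 \<le> (norm (RA (B v) q0))\<^sup>2" using c1 c2 by auto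
    then have "c2 * (norm (g v - g q0))\<^sup>2 = 0" "(norm (RB v q0))\<^sup>2 = 0"
      using D0 unfolding Dq_def by linarith+
    then have "g v - g q0 = 0" "RB v q0 = 0" using c2 by auto
    then have "B v = v" unfolding RB_def by (simp add: algebra_simps)
    moreover then have "A v = v" using Tv unfolding T_def by simp
    ultimately show "v \<in> G" using fixA fixB G_def by blast
  next
    assume "v \<in> G"
    then have "B v = v" "A v = v" using fixA fixB G_def by auto
    then show "T v = v" unfolding T_def by simp
  qed
  have Geq: "G = {v. T v = v}" using fixT by auto
  have Gcl: "closed G" unfolding Geq by (rule fix_closed) (rule nexp)
  have Gcv: "convex G" unfolding Geq by (rule fix_convex) (rule nexp)
  have Gne: "G \<noteq> {}" using q0 by blast
  note GD = Gne Gcl Gcv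
  have fejx: "norm (x m - q) \<le> norm (x k - q)" if "q \<in> G" "k \<le> m" for q k m
    using that(2)
  proof (induction m rule: dec_induct)
    case base then show ?case by simp
  next
    case (step m) then show ?case using fej[OF that(1), of "x m"] xT[of m] by simp
  qed
  define M where "M = norm q0 + norm (x 0 - q0)"
  have bnd: "norm (x k) \<le> M" for k
  proof -
    have "norm (x k - q0) \<le> norm (x 0 - q0)" using fejx[OF q0, of 0 k] by simp
    then show ?thesis unfolding M_def using norm_triangle_ineq2[of "x k" q0] by linarith
  qed
  define D where "D k = Dq (x k) q0" for k
  have sumD: "(norm (x n - q0))\<^sup>2 + (\<Sum>k<n. D k) \<le> (norm (x 0 - q0))\<^sup>2" for n
  proof (induction n)
    case 0 then show ?case by simp
  next
    case (Suc n)
    have "(norm (x (Suc n) - q0))\<^sup>2 \<le> (norm (x n - q0))\<^sup>2 - D n"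
      using step[OF q0, of "x n"] xT[of n] D_def by simp
    then show ?case using Suc by simp
  qed
  have "summable D"
  proof (rule summableI_nonneg_bounded)
    show "0 \<le> D n" for n unfolding D_def by (rule Dq0)
    show "(\<Sum>i<n. D i) \<le> (norm (x 0 - q0))\<^sup>2" for n using sumD[of n] by (smt (verit) zero_le_power2)
  qed
  then have D0: "D \<longlonglongrightarrow> 0" by (rule summable_LIMSEQ_zero)
  have t1: "(\<lambda>k. norm (g (x k) - g q0)) \<longlonglongrightarrow> 0"
    by (rule sq_to_zero[OF _ c2 _ D0]) (auto simp: D_def Dq_def less_imp_le[OF c1] less_imp_le[OF c2])
  have t2: "(\<lambda>k. norm (RB (x k) q0)) \<longlonglongrightarrow> 0"
    by (rule sq_to_zero[where c = 1, OF _ _ _ D0]) (auto simp: D_def Dq_def less_imp_le[OF c1] less_imp_le[OF c2])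
  have t3: "(\<lambda>k. norm (f (B (x k)) - f q0)) \<longlonglongrightarrow> 0"
    by (rule sq_to_zero[OF _ c1 _ D0]) (auto simp: D_def Dq_def less_imp_le[OF c1] less_imp_le[OF c2])
  have t4: "(\<lambda>k. norm (RA (B (x k)) q0)) \<longlonglongrightarrow> 0"
    by (rule sq_to_zero[where c = 1, OF _ _ _ D0]) (auto simp: D_def Dq_def less_imp_le[OF c1] less_imp_le[OF c2])
  have asreg: "(\<lambda>k. norm (x k - T (x k))) \<longlonglongrightarrow> 0"
  proof (rule tendsto_sandwich[where f = "\<lambda>_. 0" and h = "\<lambda>k. norm (RB (x k) q0)
      + lam * norm (g (x k) - g q0) + norm (RA (B (x k)) q0) + lam * norm (f (B (x k)) - f q0)"])
    show "\<forall>\<^sub>F n in sequentially. 0 \<le> norm (x n - T (x n))" by simp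
    show "\<forall>\<^sub>F n in sequentially. norm (x n - T (x n)) \<le> norm (RB (x n) q0)
      + lam * norm (g (x n) - g q0) + norm (RA (B (x n)) q0) + lam * norm (f (B (x n)) - f q0)"
    proof (rule always_eventually, rule allI)
      fix k
      have "x k - T (x k) = RB (x k) q0 + lam *\<^sub>R (g (x k) - g q0)
          + (RA (B (x k)) q0 + lam *\<^sub>R (f (B (x k)) - f q0))"
        unfolding RB_def RA_def T_def by (simp add: algebra_simps)
      then have "norm (x k - T (x k)) \<le> norm (RB (x k) q0 + lam *\<^sub>R (g (x k) - g q0))
          + norm (RA (B (x k)) q0 + lam *\<^sub>R (f (B (x k)) - f q0))"
        by (metis norm_triangle_ineq)
      also have "\<dots> \<le> (norm (RB (x k) q0) + lam * norm (g (x k) - g q0))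
          + (norm (RA (B (x k)) q0) + lam * norm (f (B (x k)) - f q0))"
        using lam by (intro add_mono order_trans[OF norm_triangle_ineq]) auto
      finally show "norm (x k - T (x k)) \<le> norm (RB (x k) q0)
      + lam * norm (g (x k) - g q0) + norm (RA (B (x k)) q0) + lam * norm (f (B (x k)) - f q0)"
        by simp
    qed
    show "(\<lambda>n. 0) \<longlonglongrightarrow> (0::real)" by simp
    show "(\<lambda>k. norm (RB (x k) q0)
      + lam * norm (g (x k) - g q0) + norm (RA (B (x k)) q0) + lam * norm (f (B (x k)) - f q0))
        \<longlonglongrightarrow> 0"
      using tendsto_add[OF tendsto_add[OF tendsto_add[OF t2 tendsto_mult_right_zero[OF t1]] t4]
          tendsto_mult_right_zero[OF t3]] by simp
  qed
  define pk where "pk k = metric_proj G (x k)" for k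
  have pkG: "pk k \<in> G" for k unfolding pk_def by (rule proj_in[OF GD])
  define d where "d k = norm (x k - pk k)" for k
  have pkmin: "d k \<le> norm (x k - q)" if "q \<in> G" for k q
    unfolding d_def pk_def using proj_exists[OF GD, of "x k"] that by blast
  have dmono: "d m \<le> d k" if "k \<le> m" for k m
    using pkmin[OF pkG[of k], of m] fejx[OF pkG[of k] that] unfolding d_def by simp
  have pkd: "(norm (pk m - pk k))\<^sup>2 \<le> (d k)\<^sup>2 - (d m)\<^sup>2" if "k \<le> m" for k m
  proof -
    have ch: "inner (x m - pk m) (pk k - pk m) \<le> 0"
      unfolding pk_def by (rule proj_char[OF GD]) (use pkG[of k] pk_def in simp)
    have "(norm (x m - pk k))\<^sup>2 = (d m)\<^sup>2 + (norm (pk m - pk k))\<^sup>2 - 2 * inner (x m - pk m) (pk k - pk m)"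
      unfolding d_def power2_norm_eq_inner
      by (simp add: inner_diff_left inner_diff_right inner_commute algebra_simps)
    moreover have "norm (x m - pk k) \<le> d k" using fejx[OF pkG[of k] that] unfolding d_def .
    then have "(norm (x m - pk k))\<^sup>2 \<le> (d k)\<^sup>2" by (intro power_mono) auto
    ultimately show ?thesis using ch by linarith
  qed
  have "decseq (\<lambda>k. (d k)\<^sup>2)"
    unfolding decseq_def using dmono by (simp add: d_def power_mono)
  then obtain L where L: "(\<lambda>k. (d k)\<^sup>2) \<longlonglongrightarrow> L" "\<forall>i. L \<le> (d i)\<^sup>2"
    using decseq_convergent[of "\<lambda>k. (d k)\<^sup>2" 0] by auto
  have "Cauchy pk"
  proof (rule CauchyI)
    fix \<epsilon> :: real assume e: "0 < \<epsilon>"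
    have "eventually (\<lambda>k. (d k)\<^sup>2 < L + \<epsilon>\<^sup>2) sequentially"
      using order_tendstoD(2)[OF L(1)] e by simp
    then obtain N where N: "\<And>k. N \<le> k \<Longrightarrow> (d k)\<^sup>2 < L + \<epsilon>\<^sup>2"
      by (auto simp: eventually_sequentially)
    have *: "norm (pk m - pk n) < \<epsilon>" if "N \<le> n" "n \<le> m" for m n
    proof -
      have "(norm (pk m - pk n))\<^sup>2 < \<epsilon>\<^sup>2"
        using pkd[OF that(2)] N[OF that(1)] L(2)[rule_format, of m] by linarith
      then show ?thesis by (rule power2_less_imp_less) (use e in simp)
    qed
    show "\<exists>M. \<forall>m\<ge>M. \<forall>n\<ge>M. norm (pk m - pk n) < \<epsilon>"
    proof (intro exI allI impI)
      fix m n assume "N \<le> m" "N \<le> n"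
      then show "norm (pk m - pk n) < \<epsilon>"
        using *[of n m] *[of m n] by (cases "n \<le> m") (auto simp: norm_minus_commute)
    qed
  qed
  then obtain p where p: "pk \<longlonglongrightarrow> p" using Cauchy_convergent_iff convergent_def by blast
  have pG: "p \<in> G" using closed_sequentially[OF Gcl pkG p] .
  have npk: "(\<lambda>k. norm (pk k - p)) \<longlonglongrightarrow> 0"
    using p by (simp add: LIM_zero tendsto_norm_zero)
  have pineq: "\<exists>e. e \<longlonglongrightarrow> 0 \<and> (\<forall>k. inner (x k - p) (c - p) \<le> e k)" if "T c = c" for c
  proof (intro exI conjI allI)
    have cG: "c \<in> G" using fixT that by blast
    show "(\<lambda>k. (d 0 + norm (c - p)) * norm (pk k - p)) \<longlonglongrightarrow> 0"
      by (rule tendsto_mult_right_zero[OF npk])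
    fix k
    have a1: "inner (x k - pk k) (c - pk k) \<le> 0"
      unfolding pk_def by (rule proj_char[OF GD cG])
    have a2: "inner (x k - pk k) (pk k - p) \<le> d k * norm (pk k - p)"
      unfolding d_def by (rule order_trans[OF norm_cauchy_schwarz]) simp
    have a2': "d k * norm (pk k - p) \<le> d 0 * norm (pk k - p)"
      using dmono[of 0 k] by (intro mult_right_mono) auto
    have a3: "inner (pk k - p) (c - p) \<le> norm (pk k - p) * norm (c - p)"
      by (rule norm_cauchy_schwarz)
    have "inner (x k - p) (c - p) = inner (x k - pk k) (c - pk k) + inner (x k - pk k) (pk k - p)
        + inner (pk k - p) (c - p)"
      by (simp add: inner_diff_left inner_diff_right inner_commute algebra_simps)
    then show "inner (x k - p) (c - p) \<le> (d 0 + norm (c - p)) * norm (pk k - p)"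
      using a1 a2 a2' a3 by (simp add: algebra_simps)
  qed
  have nofreq: "\<not> frequently (\<lambda>k. \<epsilon> \<le> inner (x k - p) z) sequentially" if e: "0 < \<epsilon>" for \<epsilon> z
  proof
    assume "frequently (\<lambda>k. \<epsilon> \<le> inner (x k - p) z) sequentially"
    then have inf: "infinite {k. \<epsilon> \<le> inner (x k - p) z}"
      by (simp add: frequently_cofinite[symmetric] cofinite_eq_sequentially)
    define \<sigma> where "\<sigma> = enumerate {k. \<epsilon> \<le> inner (x k - p) z}"
    have sm: "strict_mono \<sigma>" unfolding \<sigma>_def by (rule strict_mono_enumerate[OF inf])
    have sin: "\<epsilon> \<le> inner (x (\<sigma> j) - p) z" for j
      using enumerate_in_set[OF inf, of j] unfolding \<sigma>_def by simp
    show False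
    proof (rule core[where u = "x \<circ> \<sigma>" and T = T and M = M and p = p and \<epsilon> = \<epsilon> and z = z])
      show "norm ((x \<circ> \<sigma>) j) \<le> M" for j using bnd by simp
      show "norm (T a - T b) \<le> norm (a - b)" for a b by (rule nexp)
      show "(\<lambda>j. norm ((x \<circ> \<sigma>) j - T ((x \<circ> \<sigma>) j))) \<longlonglongrightarrow> 0"
        using LIMSEQ_subseq_LIMSEQ[OF asreg sm] by (simp add: o_def)
      show "\<exists>e. e \<longlonglongrightarrow> 0 \<and> (\<forall>j. inner ((x \<circ> \<sigma>) j - p) (c - p) \<le> e j)" if Tc: "T c = c" for c
      proof -
        obtain e where "e \<longlonglongrightarrow> 0" "\<forall>k. inner (x k - p) (c - p) \<le> e k" using pineq[OF Tc] by blast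
        then show ?thesis using LIMSEQ_subseq_LIMSEQ[OF _ sm, of e 0]
          by (intro exI[of _ "e \<circ> \<sigma>"]) auto
      qed
      show "0 < \<epsilon>" by (rule e)
      show "\<epsilon> \<le> inner ((x \<circ> \<sigma>) j - p) z" for j using sin by simp
    qed
  qed
  have weak: "weakly_converges x p"
    unfolding weakly_converges_def
  proof
    fix z
    show "(\<lambda>k. inner (x k) z) \<longlonglongrightarrow> inner p z"
    proof (rule tendstoI)
      fix \<epsilon> :: real assume e: "0 < \<epsilon>"
      have e1: "eventually (\<lambda>k. inner (x k - p) z < \<epsilon>) sequentially"
        using nofreq[OF e, of z] by (simp add: not_frequently not_le)
      have e2: "eventually (\<lambda>k. inner (x k - p) (- z) < \<epsilon>) sequentially"
        using nofreq[OF e, of "- z"] by (simp add: not_frequently not_le)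
      show "eventually (\<lambda>k. dist (inner (x k) z) (inner p z) < \<epsilon>) sequentially"
        using e1 e2
      proof (rule eventually_elim2)
        fix k assume "inner (x k - p) z < \<epsilon>" "inner (x k - p) (- z) < \<epsilon>"
        then show "dist (inner (x k) z) (inner p z) < \<epsilon>"
          by (simp add: dist_real_def inner_diff_left abs_less_iff)
      qed
    qed
  qed
  show ?thesis
    using pG weak p unfolding G_def pk_def by blast
qed

end
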